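(* If $(S,K,I)$ is a split graph and $C$ is an induced cycle in the factor graph $\Phi(S)$, then $|C|\leq 5$.
   Context: A split graph $(S,K,I)$ is a graph $S$ together with a fixed partition $V(S)=K\dot\cup I$, where $K$ is a clique and $I$ is an independent set. For a vertex $v$ of $S$, $N_v$ denotes its open neighborhood in $S$ and $d_v=|N_v|$; $\eta_{uv}=|N_u\cap N_v|$. The factor graph $\Phi(S)$ is the loopless multigraph with vertex set $I$ in which, for distinct $u,v\in I$, there is one edge joining $u$ and $v$ for each 2-switch of $S$ acting on $u$ and $v$ (a 2-switch replaces edges $ab,cd$ with $ac,bd$ when $ab,cd\in E(S)$ and $ac,bd\notin E(S)$); equivalently, the multiplicity of $uv$ is $\sigma_{uv}=(d_u-\eta_{uv})(d_v-\eta_{uv})$, and $u,v$ are adjacent iff $\sigma_{uv}>0$. An induced cycle $C=v_1\ldots v_nv_1$ ($n\geq 3$) in $\Phi(S)$ consists of distinct vertices with $v_iv_{i+1}$ and $v_nv_1$ adjacent and no other pair adjacent (multiplicities ignored); $|C|=n$ is its number of vertices. *)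

theory Defs
  imports Main
begin

definition split_graph :: "'a set \<Rightarrow> ('a \<Rightarrow> 'a \<Rightarrow> bool) \<Rightarrow> 'a set \<Rightarrow> 'a set \<Rightarrow> bool" where
  "split_graph V E K I \<longleftrightarrow>
     finite V \<and>
     (\<forall>u v. E u v \<longrightarrow> u \<in> V \<and> v \<in> V) \<and>
     (\<forall>u v. E u v \<longrightarrow> E v u) \<and>
     (\<forall>v. \<not> E v v) \<and>
     K \<union> I = V \<and> K \<inter> I = {} \<and>
     (\<forall>u\<in>K. \<forall>v\<in>K. u \<noteq> v \<longrightarrow> E u v) \<and>
     (\<forall>u\<in>I. \<forall>v\<in>I. \<not> E u v)"

definition nbhd :: "'a set \<Rightarrow> ('a \<Rightarrow> 'a \<Rightarrow> bool) \<Rightarrow> 'a \<Rightarrow> 'a set" where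
  "nbhd V E v = {w \<in> V. E v w}"

definition deg :: "'a set \<Rightarrow> ('a \<Rightarrow> 'a \<Rightarrow> bool) \<Rightarrow> 'a \<Rightarrow> nat" where
  "deg V E v = card (nbhd V E v)"

definition eta :: "'a set \<Rightarrow> ('a \<Rightarrow> 'a \<Rightarrow> bool) \<Rightarrow> 'a \<Rightarrow> 'a \<Rightarrow> nat" where
  "eta V E u v = card (nbhd V E u \<inter> nbhd V E v)"

text \<open>Multiplicity of the edge uv in the factor graph (number of 2-switches on u, v).\<close>
definition sigma :: "'a set \<Rightarrow> ('a \<Rightarrow> 'a \<Rightarrow> bool) \<Rightarrow> 'a \<Rightarrow> 'a \<Rightarrow> nat" where
  "sigma V E u v = (deg V E u - eta V E u v) * (deg V E v - eta V E u v)"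

text \<open>Adjacency in the factor graph Phi(S) (vertex set I, multiplicities ignored).\<close>
definition factor_adj :: "'a set \<Rightarrow> ('a \<Rightarrow> 'a \<Rightarrow> bool) \<Rightarrow> 'a set \<Rightarrow> 'a \<Rightarrow> 'a \<Rightarrow> bool" where
  "factor_adj V E I u v \<longleftrightarrow> u \<in> I \<and> v \<in> I \<and> u \<noteq> v \<and> sigma V E u v > 0"

definition factor_induced_cycle :: "'a set \<Rightarrow> ('a \<Rightarrow> 'a \<Rightarrow> bool) \<Rightarrow> 'a set \<Rightarrow> 'a list \<Rightarrow> bool" where
  "factor_induced_cycle V E I C \<longleftrightarrow>
     length C \<ge> 3 \<and> distinct C \<and> set C \<subseteq> I \<and>
     (\<forall>i < length C. \<forall>j < length C.
        factor_adj V E I (C ! i) (C ! j) \<longleftrightarrow>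
        (j = (i + 1) mod length C \<or> i = (j + 1) mod length C))"

end

theory Submission
  imports Defs
begin

lemma adj_iff:
  assumes "split_graph V E K I" "u \<in> I" "v \<in> I" "u \<noteq> v"
  shows "factor_adj V E I u v \<longleftrightarrow>
     \<not> nbhd V E u \<subseteq> nbhd V E v \<and> \<not> nbhd V E v \<subseteq> nbhd V E u"
proof -
  have fin: "finite (nbhd V E x)" for x
    using assms(1) unfolding split_graph_def nbhd_def by auto
  have g: "(deg V E x - eta V E x y > 0) \<longleftrightarrow> \<not> nbhd V E x \<subseteq> nbhd V E y" for x y
  proof
    assume "deg V E x - eta V E x y > 0"
    then have "card (nbhd V E x \<inter> nbhd V E y) < card (nbhd V E x)"
      unfolding deg_def eta_def by simp
    then show "\<not> nbhd V E x \<subseteq> nbhd V E y"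
      by (metis Int_absorb2 less_irrefl)
  next
    assume "\<not> nbhd V E x \<subseteq> nbhd V E y"
    then have "nbhd V E x \<inter> nbhd V E y \<subset> nbhd V E x" by auto
    then have "card (nbhd V E x \<inter> nbhd V E y) < card (nbhd V E x)"
      using fin psubset_card_mono by blast
    then show "deg V E x - eta V E x y > 0"
      unfolding deg_def eta_def by simp
  qed
  have e: "eta V E v u = eta V E u v" unfolding eta_def by (simp add: Int_commute)
  show ?thesis
    unfolding factor_adj_def sigma_def using assms g[of u v] g[of v u] e
    by auto
qed

theorem lemma3p1:
  fixes V K I :: "'a set" and E :: "'a \<Rightarrow> 'a \<Rightarrow> bool" and C :: "'a list"
  assumes "split_graph V E K I"
    and "factor_induced_cycle V E I C"
  shows "length C \<le> 5"
proof (rule ccontr)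
  assume "\<not> length C \<le> 5"
  define n where "n = length C"
  have n5: "n \<ge> 5" using \<open>\<not> length C \<le> 5\<close> n_def by simp
  define N where "N i = nbhd V E (C ! i)" for i
  have fin: "finite (N i)" for i
    using assms(1) unfolding split_graph_def nbhd_def N_def by auto
  have dist: "distinct C" and sub: "set C \<subseteq> I"
    and cyc: "\<And>i j. i < n \<Longrightarrow> j < n \<Longrightarrow> factor_adj V E I (C ! i) (C ! j) \<longleftrightarrow>
        (j = (i + 1) mod n \<or> i = (j + 1) mod n)"
    using assms(2) unfolding factor_induced_cycle_def n_def by auto
  have key: "\<And>i j. i < n \<Longrightarrow> j < n \<Longrightarrow> i \<noteq> j \<Longrightarrow>
      (\<not> N i \<subseteq> N j \<and> \<not> N j \<subseteq> N i) \<longleftrightarrow> (j = (i + 1) mod n \<or> i = (j + 1) mod n)"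
  proof -
    fix i j assume ij: "i < n" "j < n" "i \<noteq> j"
    have "C ! i \<noteq> C ! j" using dist ij n_def nth_eq_iff_index_eq by metis
    moreover have "C ! i \<in> I" "C ! j \<in> I" using sub ij n_def by auto
    ultimately show "(\<not> N i \<subseteq> N j \<and> \<not> N j \<subseteq> N i) \<longleftrightarrow> (j = (i + 1) mod n \<or> i = (j + 1) mod n)"
      using adj_iff[OF assms(1)] cyc[OF ij(1,2)] unfolding N_def by metis
  qed
  obtain k where k: "k < n" and kmin: "\<And>j. j < n \<Longrightarrow> card (N k) \<le> card (N j)"
  proof -
    have F: "finite ((\<lambda>i. card (N i)) ` {..<n})" "(\<lambda>i. card (N i)) ` {..<n} \<noteq> {}" using n5 by (auto simp: lessThan_empty_iff)
    then have "Min ((\<lambda>i. card (N i)) ` {..<n}) \<in> (\<lambda>i. card (N i)) ` {..<n}" by (rule Min_in)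
    then obtain k where "k < n" "card (N k) = Min ((\<lambda>i. card (N i)) ` {..<n})" by auto
    then show ?thesis using that by (metis Min_le F(1) image_eqI lessThan_iff)
  qed
  have below: "N k \<subseteq> N j" if "j < n" "N k \<subseteq> N j \<or> N j \<subseteq> N k" for j
    using that kmin[of j] fin card_seteq by blast
  define p where "p = (if k+1<n then k+1 else k+1-n)"
  define q where "q = (if k+2<n then k+2 else k+2-n)"
  define m where "m = (if k=0 then n-1 else k-1)"
  define r where "r = (if k \<ge> 2 then k-2 else k+n-2)"
  define s where "s = (if k+3<n then k+3 else k+3-n)"
  have lt: "p < n" "q < n" "m < n" "r < n" using n5 k unfolding p_def q_def m_def r_def by auto
  have sm: "x < n \<Longrightarrow> (x+1) mod n = (if x+1 = n then 0 else x+1)" for x by auto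
  have sc: "(k+1) mod n = p" "(p+1) mod n = q" "(m+1) mod n = k" "(r+1) mod n = m" "(q+1) mod n = s"
    using k n5 lt by (subst sm; auto simp: p_def q_def m_def r_def s_def)+
  have ne: "k \<noteq> p" "k \<noteq> q" "k \<noteq> m" "k \<noteq> r" "k \<noteq> s" "p \<noteq> q" "p \<noteq> m" "p \<noteq> r" "p \<noteq> s"
     "q \<noteq> m" "q \<noteq> r" "m \<noteq> r" "m \<noteq> s" "q \<noteq> s"
    using k n5 unfolding p_def q_def m_def r_def s_def by auto
  have a1: "\<not> N k \<subseteq> N p \<and> \<not> N p \<subseteq> N k"
    using key[of k p] k lt sc ne by auto
  have a2: "\<not> N k \<subseteq> N m \<and> \<not> N m \<subseteq> N k"
    using key[of k m] k lt sc ne by auto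
  have a3: "\<not> N p \<subseteq> N q \<and> \<not> N q \<subseteq> N p"
    using key[of p q] k lt sc ne by auto
  have a4: "\<not> N m \<subseteq> N r \<and> \<not> N r \<subseteq> N m"
    using key[of m r] k lt sc ne by auto
  have b1: "N k \<subseteq> N q \<or> N q \<subseteq> N k" using key[of k q] k lt sc ne by auto
  have b2: "N k \<subseteq> N r \<or> N r \<subseteq> N k" using key[of k r] k lt sc ne by auto
  have b3: "N m \<subseteq> N q \<or> N q \<subseteq> N m" using key[of m q] k lt sc ne by auto
  have b4: "N p \<subseteq> N r \<or> N r \<subseteq> N p" using key[of p r] k lt sc ne by auto
  have b5: "N p \<subseteq> N m \<or> N m \<subseteq> N p" using key[of p m] k lt sc ne by auto
  have "N k \<subseteq> N q" "N k \<subseteq> N r" using below b1 b2 lt by auto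
  then have "N m \<subseteq> N q" "N p \<subseteq> N r" using a1 a2 b3 b4 by auto
  then show False using a3 a4 b5 by auto
qed

end
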